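(* Let $M$ be an $m\times n$ ACI-matrix over a field $\mathbb{F}$, let $F\subseteq\{1,\dots,n\}$ be a factor set (resp. semifactor set) of $M$, and let $P$ be a permutation matrix of order $m$ such that $$PMQ_F=\begin{bmatrix} A & B\\ 0 & C\end{bmatrix},$$ where $A$ has $\#F$ columns and $A$ has linearly independent rows. Then this block decomposition is an $F$-decomposition (resp. $F$-semidecomposition); that is, the zero block is Big (resp. Medium), $A$ is FRmR and $C$ is FCmR.
   Context: Let $\mathbb{F}$ be a field. An ACI-matrix is a matrix with entries in $\mathbb{F}[x_1,\dots,x_k]$ whose entries are polynomials of degree at most one and such that no indeterminate appears in two different columns. A completion is an assignment of values in $\mathbb{F}$ to all indeterminates; $\mathrm{maxRank}(N)$ is the maximum rank of a completion. ACI-matrices (and blocks) of size $0\times q$ ($q>0$, wide degenerate), $p\times 0$ ($p>0$, tall degenerate) and $0\times0$ (void) are allowed. $N$ is FRmR if $\mathrm{maxRank}(N)=\mathrm{rows}(N)$, FCmR if $\mathrm{maxRank}(N)=\mathrm{cols}(N)$; by convention tall degenerate is FRmR, wide degenerate is FCmR, void is both. For an $m\times n$ block matrix $\begin{bmatrix} A & B\\ 0 & C\end{bmatrix}$ with lower-left $r\times s$ zero block, the zero block is Big if $r+s>\max\{m,n\}$, Medium if $r+s=\max\{m,n\}$. For $F=\{f_1<\dots<f_s\}\subseteq\{1,\dots,n\}$ with complement $\{g_1<\dots<g_{n-s}\}$, $Q_F$ is the $n\times n$ permutation matrix such that $MQ_F$ has as columns $f_1,\dots,f_s,g_1,\dots,g_{n-s}$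 of $M$ in that order. $F$ is a factor set of $M$ if there is a nonsingular constant $m\times m$ matrix $R$ with $RMQ_F=\begin{bmatrix} A & B\\ 0 & C\end{bmatrix}$, $A$ having $\#F$ columns, the zero block Big, $A$ FRmR and $C$ FCmR; such an $RMQ_F$ is an $F$-decomposition. $F$ is a semifactor set (and $RMQ_F$ an $F$-semidecomposition) if the same holds with the zero block Medium. Linear independence of rows is over $\mathbb{F}$: if a column involves indeterminates $y_1,\dots,y_t$, its entries lie in the $\mathbb{F}$-vector space $\mathbb{F}+\mathbb{F}y_1+\dots+\mathbb{F}y_t$, and rows are vectors in the product of these spaces. *)

theory Defs
  imports "Jordan_Normal_Form.DL_Rank"
begin

text \<open>An ACI-matrix over the field 'a in the finitely many indeterminates of the
  finite type 'v is represented by its affine decomposition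
  N = N None + sum over v of x_v * N (Some v), where N None is the constant part
  and N (Some v) is the coefficient matrix of the indeterminate x_v.
  (Entries are polynomials of degree at most one.)\<close>

type_synonym ('a, 'v) aci = "'v option \<Rightarrow> 'a mat"

definition aci_dim :: "('a, 'v) aci \<Rightarrow> nat \<Rightarrow> nat \<Rightarrow> bool" where
  "aci_dim N m n \<longleftrightarrow> (\<forall>k. N k \<in> carrier_mat m n)"

definition aci_rows :: "('a, 'v) aci \<Rightarrow> nat" where
  "aci_rows N = dim_row (N None)"

definition aci_cols :: "('a, 'v) aci \<Rightarrow> nat" where
  "aci_cols N = dim_col (N None)"

definition is_aci :: "('a::zero, 'v) aci \<Rightarrow> nat \<Rightarrow> nat \<Rightarrow> bool" where
  "is_aci N m n \<longleftrightarrow> aci_dim N m n \<and>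
     (\<forall>v i i' j j'. i < m \<longrightarrow> i' < m \<longrightarrow> j < n \<longrightarrow> j' < n \<longrightarrow>
        N (Some v) $$ (i, j) \<noteq> 0 \<longrightarrow> N (Some v) $$ (i', j') \<noteq> 0 \<longrightarrow> j = j')"

definition completion :: "('a::field, 'v::finite) aci \<Rightarrow> ('v \<Rightarrow> 'a) \<Rightarrow> 'a mat" where
  "completion N s = mat (aci_rows N) (aci_cols N)
     (\<lambda>(i, j). N None $$ (i, j) + (\<Sum>v\<in>UNIV. s v * N (Some v) $$ (i, j)))"

definition mat_rank :: "'a::field mat \<Rightarrow> nat" where
  "mat_rank A = vec_space.rank (dim_row A) A"

definition maxRank :: "('a::field, 'v::finite) aci \<Rightarrow> nat" where
  "maxRank N = Max (range (\<lambda>s. mat_rank (completion N s)))"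

text \<open>Full row / column maximum rank, with the degenerate conventions:
  tall degenerate (p x 0) is FRmR, wide degenerate (0 x q) is FCmR.\<close>
definition FRmR :: "('a::field, 'v::finite) aci \<Rightarrow> bool" where
  "FRmR N \<longleftrightarrow> aci_cols N = 0 \<or> maxRank N = aci_rows N"

definition FCmR :: "('a::field, 'v::finite) aci \<Rightarrow> bool" where
  "FCmR N \<longleftrightarrow> aci_rows N = 0 \<or> maxRank N = aci_cols N"

definition rows_lin_indep :: "('a::field, 'v) aci \<Rightarrow> bool" where
  "rows_lin_indep N \<longleftrightarrow>
     (\<forall>c::nat \<Rightarrow> 'a. (\<forall>k j. j < aci_cols N \<longrightarrow>
          (\<Sum>i<aci_rows N. c i * N k $$ (i, j)) = 0)
        \<longrightarrow> (\<forall>i < aci_rows N. c i = 0))"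

definition aci_lmult :: "'a::field mat \<Rightarrow> ('a, 'v) aci \<Rightarrow> ('a, 'v) aci" where
  "aci_lmult R N = (\<lambda>k. R * N k)"

definition aci_rmult :: "('a::field, 'v) aci \<Rightarrow> 'a mat \<Rightarrow> ('a, 'v) aci" where
  "aci_rmult N Q = (\<lambda>k. N k * Q)"

definition aci_block :: "('a, 'v) aci \<Rightarrow> nat \<Rightarrow> nat \<Rightarrow> nat \<Rightarrow> nat \<Rightarrow> ('a, 'v) aci" where
  "aci_block N r0 r1 c0 c1 = (\<lambda>k. mat (r1 - r0) (c1 - c0) (\<lambda>(i, j). N k $$ (i + r0, j + c0)))"

text \<open>Column indices are 0-based: F \<subseteq> {0..<n}. The column order of M * Q_F is
  the elements of F increasingly, followed by the complement increasingly.\<close>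
definition col_order :: "nat \<Rightarrow> nat set \<Rightarrow> nat list" where
  "col_order n F = sorted_list_of_set F @ sorted_list_of_set ({0..<n} - F)"

definition Q_F :: "nat \<Rightarrow> nat set \<Rightarrow> 'a::field mat" where
  "Q_F n F = mat n n (\<lambda>(i, j). if i = col_order n F ! j then 1 else 0)"

definition permutation_mat :: "nat \<Rightarrow> 'a::field mat \<Rightarrow> bool" where
  "permutation_mat m P \<longleftrightarrow>
     (\<exists>\<pi>. bij_betw \<pi> {0..<m} {0..<m} \<and> P = mat m m (\<lambda>(i, j). if j = \<pi> i then 1 else 0))"

text \<open>Block upper triangular shape [A B; 0 C] with A of size p x s, m x n in total,
  i.e. the lower-left (m - p) x s block is zero.\<close>
definition lower_left_zero :: "('a::zero, 'v) aci \<Rightarrow> nat \<Rightarrow> nat \<Rightarrow> bool" where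
  "lower_left_zero N p s \<longleftrightarrow>
     p \<le> aci_rows N \<and> s \<le> aci_cols N \<and>
     (\<forall>k i j. p \<le> i \<longrightarrow> i < aci_rows N \<longrightarrow> j < s \<longrightarrow> N k $$ (i, j) = 0)"

definition blockA :: "('a, 'v) aci \<Rightarrow> nat \<Rightarrow> nat \<Rightarrow> ('a, 'v) aci" where
  "blockA N p s = aci_block N 0 p 0 s"

definition blockC :: "('a, 'v) aci \<Rightarrow> nat \<Rightarrow> nat \<Rightarrow> ('a, 'v) aci" where
  "blockC N p s = aci_block N p (aci_rows N) s (aci_cols N)"

definition zero_big :: "nat \<Rightarrow> nat \<Rightarrow> nat \<Rightarrow> nat \<Rightarrow> bool" where
  "zero_big m n r s \<longleftrightarrow> r + s > max m n"

definition zero_medium :: "nat \<Rightarrow> nat \<Rightarrow> nat \<Rightarrow> nat \<Rightarrow> bool" where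
  "zero_medium m n r s \<longleftrightarrow> r + s = max m n"

definition decomp_form :: "bool \<Rightarrow> ('a::field, 'v::finite) aci \<Rightarrow> nat \<Rightarrow> nat \<Rightarrow> nat \<Rightarrow> nat \<Rightarrow> bool" where
  "decomp_form big N m n s p \<longleftrightarrow>
     lower_left_zero N p s \<and>
     (if big then zero_big m n (m - p) s else zero_medium m n (m - p) s) \<and>
     FRmR (blockA N p s) \<and> FCmR (blockC N p s)"

definition factor_set :: "('a::field, 'v::finite) aci \<Rightarrow> nat \<Rightarrow> nat \<Rightarrow> nat set \<Rightarrow> bool" where
  "factor_set M m n F \<longleftrightarrow> F \<subseteq> {0..<n} \<and>
     (\<exists>R p. R \<in> carrier_mat m m \<and> det R \<noteq> 0 \<and>
        decomp_form True (aci_rmult (aci_lmult R M) (Q_F n F)) m n (card F) p)"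

definition semifactor_set :: "('a::field, 'v::finite) aci \<Rightarrow> nat \<Rightarrow> nat \<Rightarrow> nat set \<Rightarrow> bool" where
  "semifactor_set M m n F \<longleftrightarrow> F \<subseteq> {0..<n} \<and>
     (\<exists>R p. R \<in> carrier_mat m m \<and> det R \<noteq> 0 \<and>
        decomp_form False (aci_rmult (aci_lmult R M) (Q_F n F)) m n (card F) p)"

end

theory Submission imports Defs begin


definition ind_cols :: "'a::field mat \<Rightarrow> nat set \<Rightarrow> bool" where
  "ind_cols A J \<longleftrightarrow> (\<forall>v \<in> carrier_vec (dim_col A). (\<forall>l<dim_col A. l \<notin> J \<longrightarrow> v $ l = 0) \<longrightarrow>
      A *\<^sub>v v = 0\<^sub>v (dim_row A) \<longrightarrow> v = 0\<^sub>v (dim_col A))"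

lemma mult_supp:
  assumes A: "A \<in> carrier_mat n nc" and v: "v \<in> carrier_vec nc"
    and supp: "\<forall>l<nc. l \<notin> J \<longrightarrow> v $ l = 0" and J: "J \<subseteq> {..<nc}" and r: "r < n"
  shows "(A *\<^sub>v v) $ r = (\<Sum>l\<in>J. A $$ (r, l) * v $ l)"
proof -
  have "(A *\<^sub>v v) $ r = (\<Sum>l\<in>{0..<nc}. A $$ (r, l) * v $ l)"
    using A v r by (auto simp: scalar_prod_def)
  also have "\<dots> = (\<Sum>l\<in>J. A $$ (r, l) * v $ l)"
    by (rule sum.mono_neutral_right, insert J supp, auto)
  finally show ?thesis .
qed

context vec_space begin

lemma rank_max_set:
  assumes "A \<in> carrier_mat n nc"
  obtains S where "S \<subseteq> set (cols A)" "lin_indpt S" "rank A = card S"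
proof -
  obtain S where S: "maximal S (\<lambda>T. T \<subseteq> set (cols A) \<and> lin_indpt T)"
    using maximal_exists[of "(\<lambda>T. T \<subseteq> set (cols A) \<and> lin_indpt T)" "card (set (cols A))" "{}"]
    by (meson List.finite_set card_mono empty_iff empty_subsetI finite_lin_indpt2 rev_finite_subset)
  then show ?thesis using rank_card_indpt[OF assms S] that unfolding maximal_def by blast
qed

lemma rank_le_nr:
  assumes "A \<in> carrier_mat n nc"
  shows "rank A \<le> n"
proof -
  obtain S where S: "S \<subseteq> set (cols A)" "lin_indpt S" "rank A = card S"
    using rank_max_set[OF assms] by blast
  have "S \<subseteq> carrier_vec n" using S(1) assms cols_dim by blast
  then have "card S \<le> dim" using li_le_dim(2)[OF fin_dim _ S(2)] by simp
  then show ?thesis using S(3) dim_is_n by simp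
qed

lemma rank_ge_ind:
  assumes A: "A \<in> carrier_mat n nc" and J: "J \<subseteq> {..<nc}" and ind: "ind_cols A J"
  shows "card J \<le> rank A"
proof -
  have ind': "\<And>v. v \<in> carrier_vec nc \<Longrightarrow> (\<forall>l<nc. l \<notin> J \<longrightarrow> v $ l = 0) \<Longrightarrow>
      A *\<^sub>v v = 0\<^sub>v n \<Longrightarrow> v = 0\<^sub>v nc" using ind A unfolding ind_cols_def by auto
  have inj: "inj_on (col A) J"
  proof (rule inj_onI, rule ccontr)
    fix i j assume ij: "i \<in> J" "j \<in> J" "col A i = col A j" "i \<noteq> j"
    define v where "v = vec nc (\<lambda>l. if l = i then 1 else if l = j then -1 else (0::'a))"
    have vc: "v \<in> carrier_vec nc" unfolding v_def by auto
    have sv: "\<forall>l<nc. l \<notin> {i,j} \<longrightarrow> v $ l = 0" unfolding v_def by auto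
    have ijn: "i < nc" "j < nc" using ij J by auto
    have "A *\<^sub>v v = 0\<^sub>v n"
    proof (rule eq_vecI)
      fix r assume "r < dim_vec (0\<^sub>v n :: 'a vec)"
      then have r: "r < n" by simp
      have "(A *\<^sub>v v) $ r = (\<Sum>l\<in>{i,j}. A $$ (r, l) * v $ l)"
        by (rule mult_supp[OF A vc sv _ r]) (use ijn in auto)
      also have "\<dots> = A $$ (r, i) - A $$ (r, j)" using ij ijn unfolding v_def by auto
      also have "\<dots> = 0" using arg_cong[OF ij(3), of "\<lambda>w. w $ r"] ijn r A by auto
      finally show "(A *\<^sub>v v) $ r = 0\<^sub>v n $ r" using r by simp
    qed (insert A, auto)
    then have "v = 0\<^sub>v nc" using ind'[OF vc] sv ij by auto
    then have "v $ i = 0" using ijn by auto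
    then show False using ijn unfolding v_def by auto
  qed
  let ?U = "col A ` J"
  have Uc: "?U \<subseteq> set (cols A)" using J A by (auto simp: cols_def)
  have Uv: "?U \<subseteq> carrier_vec n" using J A by auto
  have finJ: "finite J" using J finite_subset by blast
  have "lin_indpt ?U"
  proof (rule finite_lin_indpt2)
    show "finite ?U" using finJ by simp
    show "?U \<subseteq> carrier_vec n" using Uv by simp
    fix a assume "True" and lc: "lincomb a ?U = 0\<^sub>v n"
    define v where "v = vec nc (\<lambda>l. if l \<in> J then a (col A l) else 0)"
    have vc: "v \<in> carrier_vec nc" unfolding v_def by auto
    have sv: "\<forall>l<nc. l \<notin> J \<longrightarrow> v $ l = 0" unfolding v_def by auto
    have "A *\<^sub>v v = 0\<^sub>v n"
    proof (rule eq_vecI)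
      fix r assume "r < dim_vec (0\<^sub>v n :: 'a vec)"
      then have r: "r < n" by simp
      have "(A *\<^sub>v v) $ r = (\<Sum>l\<in>J. A $$ (r, l) * v $ l)"
        by (rule mult_supp[OF A vc sv J r])
      also have "\<dots> = (\<Sum>l\<in>J. a (col A l) * col A l $ r)"
        by (rule sum.cong, insert J A r, auto simp: v_def)
      also have "\<dots> = (\<Sum>x\<in>?U. a x * x $ r)"
        by (rule sum.reindex[OF inj, symmetric, unfolded o_def])
      also have "\<dots> = lincomb a ?U $ r" using lincomb_index[OF r Uv] by simp
      also have "\<dots> = 0" using lc r by simp
      finally show "(A *\<^sub>v v) $ r = 0\<^sub>v n $ r" using r by simp
    qed (insert A, auto)
    then have v0: "v = 0\<^sub>v nc" using ind'[OF vc sv] by auto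
    show "\<forall>x\<in>?U. a x = 0"
    proof
      fix x assume "x \<in> ?U"
      then obtain l where l: "l \<in> J" "x = col A l" by auto
      then have "v $ l = 0" using v0 J by auto
      then show "a x = 0" using l J unfolding v_def by auto
    qed
  qed
  from rank_ge_card_indpt[OF A Uc this] show ?thesis using card_image[OF inj] by simp
qed

lemma indpt_ind:
  assumes A: "A \<in> carrier_mat n nc" and S: "S \<subseteq> set (cols A)" and li: "lin_indpt S"
  shows "\<exists>J \<subseteq> {..<nc}. card J = card S \<and> ind_cols A J"
proof -
  have "\<forall>x\<in>S. \<exists>l. l < nc \<and> col A l = x" proof
    fix x assume "x \<in> S"
    then have "x \<in> set (cols A)" using S by blast
    then show "\<exists>l. l < nc \<and> col A l = x" using A by (auto simp: cols_def)
  qed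
  then obtain g where g: "\<And>x. x \<in> S \<Longrightarrow> g x < nc \<and> col A (g x) = x" by metis
  have inj: "inj_on g S" proof (rule inj_onI)
    fix x y assume "x \<in> S" "y \<in> S" "g x = g y"
    then show "x = y" using g[of x] g[of y] by metis
  qed
  let ?J = "g ` S"
  have J: "?J \<subseteq> {..<nc}" using g by auto
  have Sv: "S \<subseteq> carrier_vec n" using S A cols_dim by blast
  have finS: "finite S" using S finite_subset by blast
  have "ind_cols A ?J" unfolding ind_cols_def
  proof (intro ballI impI)
    fix v :: "'a vec" assume vc: "v \<in> carrier_vec (dim_col A)" and sv: "\<forall>l<dim_col A. l \<notin> ?J \<longrightarrow> v $ l = 0"
      and Av: "A *\<^sub>v v = 0\<^sub>v (dim_row A)"
    have vc': "v \<in> carrier_vec nc" and sv': "\<forall>l<nc. l \<notin> ?J \<longrightarrow> v $ l = 0" using vc sv A by auto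
    define a where "a = (\<lambda>x. v $ g x)"
    have "lincomb a S = 0\<^sub>v n"
    proof (rule eq_vecI)
      show "dim_vec (lincomb a S) = dim_vec (0\<^sub>v n :: 'a vec)" using lincomb_dim[OF finS Sv] by simp
      fix r assume "r < dim_vec (0\<^sub>v n :: 'a vec)"
      then have r: "r < n" by simp
      have "lincomb a S $ r = (\<Sum>x\<in>S. a x * x $ r)" using lincomb_index[OF r Sv] by simp
      also have "\<dots> = (\<Sum>x\<in>S. A $$ (r, g x) * v $ g x)"
        proof (rule sum.cong[OF refl])
        fix x assume x: "x \<in> S"
        have e: "col A (g x) $ r = A $$ (r, g x)" using g[OF x] A r by (intro index_col) auto
        have "x $ r = A $$ (r, g x)" using e g[OF x] by metis
        then show "a x * x $ r = A $$ (r, g x) * v $ g x" unfolding a_def by (simp add: mult.commute)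
      qed
      also have "\<dots> = (\<Sum>l\<in>?J. A $$ (r, l) * v $ l)"
        by (rule sum.reindex[OF inj, symmetric, unfolded o_def])
      also have "\<dots> = (A *\<^sub>v v) $ r" by (rule mult_supp[OF A vc' sv' J r, symmetric])
      also have "\<dots> = 0" using Av r A by simp
      finally show "lincomb a S $ r = 0\<^sub>v n $ r" using r by simp
    qed
    then have "a \<in> S \<rightarrow> {\<zero>\<^bsub>class_ring\<^esub>}"
      using not_lindepD[OF li finS subset_refl] by auto
    then have "\<forall>l\<in>?J. v $ l = 0" unfolding a_def by auto
    then show "v = 0\<^sub>v (dim_col A)" using vc sv by (intro eq_vecI, auto)
  qed
  then show ?thesis using J card_image[OF inj] by blast
qed

end

lemma rank_mult_left:
  assumes X: "X \<in> carrier_mat n nc" and T: "T \<in> carrier_mat n' n"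
  shows "vec_space.rank n' (T * X) \<le> vec_space.rank n X"
proof -
  have TX: "T * X \<in> carrier_mat n' nc" using X T by auto
  obtain S where S: "S \<subseteq> set (cols (T * X))" "module.lin_indpt class_ring (module_vec TYPE('a) n') S"
     "vec_space.rank n' (T * X) = card S"
    using vec_space.rank_max_set[OF TX] by blast
  obtain J where J: "J \<subseteq> {..<nc}" "card J = card S" "ind_cols (T * X) J"
    using vec_space.indpt_ind[OF TX S(1,2)] by blast
  have "ind_cols X J" unfolding ind_cols_def
  proof (intro ballI impI)
    fix v :: "'a vec" assume vc: "v \<in> carrier_vec (dim_col X)" and sv: "\<forall>l<dim_col X. l \<notin> J \<longrightarrow> v $ l = 0"
      and Xv: "X *\<^sub>v v = 0\<^sub>v (dim_row X)"
    have "(T * X) *\<^sub>v v = T *\<^sub>v (X *\<^sub>v v)" using X T vc by auto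
    also have "\<dots> = 0\<^sub>v n'" using Xv X T by auto
    finally show "v = 0\<^sub>v (dim_col X)" using J(3) vc sv X T unfolding ind_cols_def by auto
  qed
  from vec_space.rank_ge_ind[OF X J(1) this] show ?thesis using S(3) J(2) by simp
qed



lemma mult_entry_supp:
  assumes X: "X \<in> carrier_mat a b" and Y: "Y \<in> carrier_mat b c" and i: "i < a" and j: "j < c"
    and L: "L \<subseteq> {..<b}" and z: "\<forall>l<b. l \<notin> L \<longrightarrow> X $$ (i, l) * Y $$ (l, j) = 0"
  shows "(X * Y) $$ (i, j) = (\<Sum>l\<in>L. X $$ (i, l) * Y $$ (l, j))"
proof -
  have "(X * Y) $$ (i, j) = (\<Sum>l\<in>{0..<b}. X $$ (i, l) * Y $$ (l, j))"
    using X Y i j by (auto simp: scalar_prod_def intro!: sum.cong)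
  also have "\<dots> = (\<Sum>l\<in>L. X $$ (i, l) * Y $$ (l, j))"
    by (rule sum.mono_neutral_right, insert L z, auto)
  finally show ?thesis .
qed

lemma completion_lmult:
  fixes Y :: "('a::field, 'v::finite) aci"
  assumes Y: "\<forall>k. Y k \<in> carrier_mat a b" and X: "X \<in> carrier_mat c a"
  shows "completion (\<lambda>k. X * Y k) s = X * completion Y s"
proof -
  have dY: "aci_rows Y = a" "aci_cols Y = b" using Y unfolding aci_rows_def aci_cols_def by auto
  have dXY: "aci_rows (\<lambda>k. X * Y k) = c" "aci_cols (\<lambda>k. X * Y k) = b"
    using Y X unfolding aci_rows_def aci_cols_def by auto
  show ?thesis
  proof (rule eq_matI)
    fix i j assume i: "i < dim_row (X * completion Y s)" and j: "j < dim_col (X * completion Y s)"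
    then have i: "i < c" and j: "j < b" using X dY by (auto simp: completion_def)
    have YN: "Y None \<in> carrier_mat a b" and YS: "\<And>v. Y (Some v) \<in> carrier_mat a b" using Y by auto
    have "completion (\<lambda>k. X * Y k) s $$ (i, j) =
       (\<Sum>l<a. X $$ (i, l) * Y None $$ (l, j)) + (\<Sum>v\<in>UNIV. s v * (\<Sum>l<a. X $$ (i, l) * Y (Some v) $$ (l, j)))"
    proof -
      have e: "(X * Y k) $$ (i, j) = (\<Sum>l<a. X $$ (i, l) * Y k $$ (l, j))" for k
      proof -
        have Yk: "Y k \<in> carrier_mat a b" using Y by auto
        then show ?thesis using X i j by (simp add: scalar_prod_def atLeast0LessThan)
      qed
      show ?thesis unfolding completion_def dXY using i j by (simp add: e)
    qed
    also have "\<dots> = (\<Sum>l<a. X $$ (i, l) * (Y None $$ (l, j) + (\<Sum>v\<in>UNIV. s v * Y (Some v) $$ (l, j))))"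
      by (simp add: sum_distrib_left sum.distrib distrib_left sum.swap[of _ UNIV] algebra_simps)
    also have "\<dots> = (X * completion Y s) $$ (i, j)"
      unfolding completion_def dY using i j X
      by (simp add: scalar_prod_def atLeast0LessThan)
    finally show "completion (\<lambda>k. X * Y k) s $$ (i, j) = (X * completion Y s) $$ (i, j)" .
  qed (insert dY dXY X, auto simp: completion_def)
qed

lemma completion_carrier: "completion Y s \<in> carrier_mat (aci_rows Y) (aci_cols Y)"
  unfolding completion_def by auto

lemma mat_rank_compl: "mat_rank (completion Y s) = vec_space.rank (aci_rows Y) (completion Y s)"
  unfolding mat_rank_def completion_def by simp

lemma maxRank_props:
  fixes Y :: "('a::field, 'v::finite) aci"
  shows "\<exists>s. maxRank Y = mat_rank (completion Y s)"
    and "mat_rank (completion Y s) \<le> maxRank Y"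
    and "maxRank Y \<le> aci_cols Y"
    and "maxRank Y \<le> aci_rows Y"
proof -
  let ?f = "\<lambda>s. mat_rank (completion Y s)"
  have le: "?f s \<le> aci_cols Y" "?f s \<le> aci_rows Y" for s
    unfolding mat_rank_compl
    using vec_space.rank_le_nc[OF completion_carrier] vec_space.rank_le_nr[OF completion_carrier] by auto
  have fin: "finite (range ?f)" by (rule finite_subset[of _ "{..aci_cols Y}"], insert le, auto)
  have ne: "range ?f \<noteq> {}" by auto
  have "maxRank Y \<in> range ?f" unfolding maxRank_def using Max_in[OF fin ne] .
  then show "\<exists>s. maxRank Y = ?f s" by auto
  then obtain s0 where s0: "maxRank Y = ?f s0" by auto
  show "?f s \<le> maxRank Y" unfolding maxRank_def using Max_ge[OF fin] by auto
  show "maxRank Y \<le> aci_cols Y" using s0 le by simp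
  show "maxRank Y \<le> aci_rows Y" using s0 le by simp
qed

lemma maxRank_lmult_le:
  fixes Y :: "('a::field, 'v::finite) aci"
  assumes Y: "\<forall>k. Y k \<in> carrier_mat a b" and X: "X \<in> carrier_mat c a" and Y': "\<forall>k. Y' k = X * Y k"
  shows "maxRank Y' \<le> maxRank Y"
proof -
  have Y'': "Y' = (\<lambda>k. X * Y k)" using Y' by auto
  obtain s0 where s0: "maxRank Y' = mat_rank (completion Y' s0)" using maxRank_props(1) by blast
  have dY: "aci_rows Y = a" "aci_cols Y = b" using Y unfolding aci_rows_def aci_cols_def by auto
  have C: "completion Y s0 \<in> carrier_mat a b" using completion_carrier[of Y s0] dY by simp
  have "mat_rank (completion Y' s0) = mat_rank (X * completion Y s0)"
    unfolding Y'' completion_lmult[OF Y X] ..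
  also have "\<dots> = vec_space.rank c (X * completion Y s0)" unfolding mat_rank_def using X by simp
  also have "\<dots> \<le> vec_space.rank a (completion Y s0)" by (rule rank_mult_left[OF C X])
  also have "\<dots> = mat_rank (completion Y s0)" unfolding mat_rank_compl dY ..
  also have "\<dots> \<le> maxRank Y" by (rule maxRank_props(2))
  finally show ?thesis using s0 by simp
qed



lemma blockA_dims: "aci_rows (blockA N p s) = p" "aci_cols (blockA N p s) = s"
  unfolding blockA_def aci_block_def aci_rows_def aci_cols_def by auto

lemma blockC_dims: "aci_rows (blockC N p s) = aci_rows N - p" "aci_cols (blockC N p s) = aci_cols N - s"
  unfolding blockC_def aci_block_def by (simp_all add: aci_rows_def aci_cols_def)

lemma blockA_entry: "i < p \<Longrightarrow> j < s \<Longrightarrow> blockA N p s k $$ (i, j) = N k $$ (i, j)"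
  unfolding blockA_def aci_block_def by auto

lemma blockC_entry: "i < aci_rows N - p \<Longrightarrow> j < aci_cols N - s \<Longrightarrow> blockC N p s k $$ (i, j) = N k $$ (i + p, j + s)"
  unfolding blockC_def aci_block_def by auto

lemma blockA_carrier: "blockA N p s k \<in> carrier_mat p s"
  unfolding blockA_def aci_block_def by auto

lemma blockC_carrier: "blockC N p s k \<in> carrier_mat (aci_rows N - p) (aci_cols N - s)"
  unfolding blockC_def aci_block_def by auto

lemma core:
  fixes N N' :: "('a::field, 'v::finite) aci"
  assumes N: "\<forall>k. N k \<in> carrier_mat m n" and N': "\<forall>k. N' k \<in> carrier_mat m n"
    and T: "T \<in> carrier_mat m m" and S: "S \<in> carrier_mat m m" and ST: "S * T = 1\<^sub>m m"
    and NT: "\<forall>k. N' k = T * N k"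
    and llz: "lower_left_zero N p s" and li: "rows_lin_indep (blockA N p s)"
    and df: "decomp_form b N' m n s p'"
  shows "decomp_form b N m n s p"
proof -
  have Nk: "N k \<in> carrier_mat m n" for k using N by auto
  have dN: "aci_rows N = m" "aci_cols N = n" "aci_rows N' = m" "aci_cols N' = n"
    using N N' unfolding aci_rows_def aci_cols_def by auto
  from df have llz': "lower_left_zero N' p' s"
    and zb: "(if b then zero_big m n (m - p') s else zero_medium m n (m - p') s)"
    and fa: "FRmR (blockA N' p' s)" and fc: "FCmR (blockC N' p' s)"
    unfolding decomp_form_def by auto
  from llz have pm: "p \<le> m" and sn: "s \<le> n"
    and Nz: "\<And>k i j. p \<le> i \<Longrightarrow> i < m \<Longrightarrow> j < s \<Longrightarrow> N k $$ (i, j) = 0"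
    unfolding lower_left_zero_def dN by auto
  from llz' have p'm: "p' \<le> m"
    and N'z: "\<And>k i j. p' \<le> i \<Longrightarrow> i < m \<Longrightarrow> j < s \<Longrightarrow> N' k $$ (i, j) = 0"
    unfolding lower_left_zero_def dN by auto
  have prodA: "N' k $$ (i, j) = (\<Sum>l\<in>{..<p}. T $$ (i, l) * N k $$ (l, j))" if "i < m" "j < s" for k i j
    unfolding NT[rule_format]
    by (rule mult_entry_supp[OF T Nk that(1)], insert that sn pm Nz, auto)
  have Tz: "T $$ (i, l) = 0" if i: "p' \<le> i" "i < m" and l: "l < p" for i l
  proof -
    have H: "\<forall>k j. j < aci_cols (blockA N p s) \<longrightarrow>
          (\<Sum>l<aci_rows (blockA N p s). T $$ (i, l) * blockA N p s k $$ (l, j)) = 0"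
    proof (intro allI impI)
      fix k j assume "j < aci_cols (blockA N p s)"
      then have j: "j < s" unfolding blockA_dims .
      have "(\<Sum>l<aci_rows (blockA N p s). T $$ (i, l) * blockA N p s k $$ (l, j))
          = (\<Sum>l\<in>{..<p}. T $$ (i, l) * N k $$ (l, j))"
        unfolding blockA_dims by (rule sum.cong, insert j, auto simp: blockA_entry)
      also have "\<dots> = N' k $$ (i, j)" using prodA[OF _ j] i by simp
      also have "\<dots> = 0" using N'z i j by auto
      finally show "(\<Sum>l<aci_rows (blockA N p s). T $$ (i, l) * blockA N p s k $$ (l, j)) = 0" .
    qed
    have "\<forall>l'<aci_rows (blockA N p s). T $$ (i, l') = 0"
      using mp[OF li[unfolded rows_lin_indep_def, THEN spec[of _ "\<lambda>l. T $$ (i, l)"]] H] by simp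
    then show ?thesis using l unfolding blockA_dims by blast
  qed
  have pp': "p \<le> p'"
  proof -
    define X where "X = mat p p' (\<lambda>(i, k). S $$ (i, k))"
    define Y where "Y = mat p' p (\<lambda>(k, j). T $$ (k, j))"
    have X: "X \<in> carrier_mat p p'" and Y: "Y \<in> carrier_mat p' p" unfolding X_def Y_def by auto
    have XY: "X * Y = 1\<^sub>m p"
    proof (rule eq_matI)
      fix i j assume "i < dim_row (1\<^sub>m p :: 'a mat)" "j < dim_col (1\<^sub>m p :: 'a mat)"
      then have i: "i < p" and j: "j < p" by auto
      have "(X * Y) $$ (i, j) = (\<Sum>l\<in>{..<p'}. X $$ (i, l) * Y $$ (l, j))"
        by (rule mult_entry_supp[OF X Y i j], auto)
      also have "\<dots> = (\<Sum>l\<in>{..<p'}. S $$ (i, l) * T $$ (l, j))"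
        by (rule sum.cong, insert i j, auto simp: X_def Y_def)
      also have "\<dots> = (S * T) $$ (i, j)"
        by (rule mult_entry_supp[OF S T, symmetric], insert i j pm p'm Tz, auto)
      also have "\<dots> = 1\<^sub>m p $$ (i, j)" using ST i j pm by auto
      finally show "(X * Y) $$ (i, j) = 1\<^sub>m p $$ (i, j)" .
    qed (insert X Y, auto)
    have "p = vec_space.rank p (1\<^sub>m p :: 'a mat)"
      using vec_space.det_rank_iff[of "1\<^sub>m p :: 'a mat" p] by simp
    also have "\<dots> \<le> vec_space.rank p' Y" unfolding XY[symmetric] by (rule rank_mult_left[OF Y X])
    also have "\<dots> \<le> p'" by (rule vec_space.rank_le_nr[OF Y])
    finally show ?thesis .
  qed
  define T1 where "T1 = mat p' p (\<lambda>(i, j). T $$ (i, j))"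
  have T1: "T1 \<in> carrier_mat p' p" unfolding T1_def by auto
  have AA: "\<forall>k. blockA N' p' s k = T1 * blockA N p s k"
  proof
    fix k
    show "blockA N' p' s k = T1 * blockA N p s k"
    proof (rule eq_matI)
      fix i j assume "i < dim_row (T1 * blockA N p s k)" "j < dim_col (T1 * blockA N p s k)"
      then have i: "i < p'" and j: "j < s" using T1 blockA_carrier[of N p s k] by auto
      have "blockA N' p' s k $$ (i, j) = N' k $$ (i, j)" using i j by (simp add: blockA_entry)
      also have "\<dots> = (\<Sum>l\<in>{..<p}. T $$ (i, l) * N k $$ (l, j))" using prodA i j p'm by simp
      also have "\<dots> = (\<Sum>l\<in>{..<p}. T1 $$ (i, l) * blockA N p s k $$ (l, j))"
        by (rule sum.cong, insert i j, auto simp: T1_def blockA_entry)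
      also have "\<dots> = (T1 * blockA N p s k) $$ (i, j)"
        by (rule mult_entry_supp[OF T1 blockA_carrier i j, symmetric], auto)
      finally show "blockA N' p' s k $$ (i, j) = (T1 * blockA N p s k) $$ (i, j)" .
    qed (insert T1 blockA_carrier[of N' p' s k] blockA_carrier[of N p s k], auto)
  qed
  have mA: "maxRank (blockA N' p' s) \<le> maxRank (blockA N p s)"
    by (rule maxRank_lmult_le[OF _ T1 AA], insert blockA_carrier, auto)
  have mA2: "maxRank (blockA N p s) \<le> p" using maxRank_props(4)[of "blockA N p s"] unfolding blockA_dims .
  have p'p: "p' \<le> p"
  proof (cases "s = 0")
    case True
    then show ?thesis using zb p'm by (cases b, auto simp: zero_big_def zero_medium_def)
  next
    case False
    then have "maxRank (blockA N' p' s) = p'" using fa unfolding FRmR_def blockA_dims by auto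
    then show ?thesis using mA mA2 by simp
  qed
  have pe: "p' = p" using pp' p'p by simp
  have fa2: "FRmR (blockA N p s)"
  proof (cases "s = 0")
    case True
    then show ?thesis unfolding FRmR_def blockA_dims by simp
  next
    case False
    then have "maxRank (blockA N' p' s) = p'" using fa unfolding FRmR_def blockA_dims by auto
    then show ?thesis unfolding FRmR_def blockA_dims using mA mA2 pe by simp
  qed
  define T2 where "T2 = mat (m - p) (m - p) (\<lambda>(i, j). T $$ (i + p, j + p))"
  have T2: "T2 \<in> carrier_mat (m - p) (m - p)" unfolding T2_def by auto
  have Cc: "blockC N p s k \<in> carrier_mat (m - p) (n - s)" for k using blockC_carrier[of N p s k] dN by simp
  have Cc': "blockC N' p s k \<in> carrier_mat (m - p) (n - s)" for k using blockC_carrier[of N' p s k] dN by simp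
  have CC: "\<forall>k. blockC N' p s k = T2 * blockC N p s k"
  proof
    fix k
    show "blockC N' p s k = T2 * blockC N p s k"
    proof (rule eq_matI)
      fix i j assume "i < dim_row (T2 * blockC N p s k)" "j < dim_col (T2 * blockC N p s k)"
      then have i: "i < m - p" and j: "j < n - s" using T2 Cc[of k] by auto
      have "blockC N' p s k $$ (i, j) = N' k $$ (i + p, j + s)" using i j dN by (simp add: blockC_entry)
      also have "\<dots> = (\<Sum>l\<in>{p..<m}. T $$ (i + p, l) * N k $$ (l, j + s))"
        unfolding NT[rule_format]
        by (rule mult_entry_supp[OF T Nk], insert i j Tz pe, auto)
      also have "\<dots> = (\<Sum>l\<in>{0..<m - p}. T $$ (i + p, l + p) * N k $$ (l + p, j + s))"
        using sum.shift_bounds_nat_ivl[of "\<lambda>l. T $$ (i + p, l) * N k $$ (l, j + s)" 0 p "m - p"] pm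
        by simp
      also have "\<dots> = (\<Sum>l\<in>{..<m - p}. T2 $$ (i, l) * blockC N p s k $$ (l, j))"
        by (rule sum.cong, insert i j dN, auto simp: T2_def blockC_entry)
      also have "\<dots> = (T2 * blockC N p s k) $$ (i, j)"
        by (rule mult_entry_supp[OF T2 Cc i j, symmetric], auto)
      finally show "blockC N' p s k $$ (i, j) = (T2 * blockC N p s k) $$ (i, j)" .
    qed (insert T2 Cc[of k] Cc'[of k], auto)
  qed
  have mC: "maxRank (blockC N' p s) \<le> maxRank (blockC N p s)"
    by (rule maxRank_lmult_le[OF _ T2 CC], insert Cc, auto)
  have mC2: "maxRank (blockC N p s) \<le> n - s" using maxRank_props(3)[of "blockC N p s"] unfolding blockC_dims dN .
  have fc2: "FCmR (blockC N p s)"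
    using fc mC mC2 unfolding FCmR_def blockC_dims dN pe by auto
  have zb2: "(if b then zero_big m n (m - p) s else zero_medium m n (m - p) s)" using zb unfolding pe .
  show ?thesis unfolding decomp_form_def using llz zb2 fa2 fc2 by blast
qed



lemma perm_inv:
  assumes "permutation_mat m (P :: 'a::field mat)"
  shows "P \<in> carrier_mat m m" "transpose_mat P * P = 1\<^sub>m m" "P * transpose_mat P = 1\<^sub>m m"
proof -
  obtain \<pi> where bij: "bij_betw \<pi> {0..<m} {0..<m}" and P: "P = mat m m (\<lambda>(i, j). if j = \<pi> i then 1 else 0)"
    using assms unfolding permutation_mat_def by blast
  show Pc: "P \<in> carrier_mat m m" unfolding P by auto
  have Pe: "P $$ (i, j) = (if j = \<pi> i then 1 else 0)" if "i < m" "j < m" for i j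
    unfolding P using that by auto
  have inj: "\<And>x y. x < m \<Longrightarrow> y < m \<Longrightarrow> \<pi> x = \<pi> y \<Longrightarrow> x = y"
    using bij unfolding bij_betw_def inj_on_def by auto
  have rng: "\<And>x. x < m \<Longrightarrow> \<pi> x < m" using bij unfolding bij_betw_def by auto
  have srj: "\<And>y. y < m \<Longrightarrow> \<exists>x<m. \<pi> x = y"
    using bij unfolding bij_betw_def by (metis atLeastLessThan_iff imageE zero_le)
  show "transpose_mat P * P = 1\<^sub>m m"
  proof (rule eq_matI)
    fix i j assume "i < dim_row (1\<^sub>m m :: 'a mat)" "j < dim_col (1\<^sub>m m :: 'a mat)"
    then have i: "i < m" and j: "j < m" by auto
    obtain l0 where l0: "l0 < m" "\<pi> l0 = i" using srj[OF i] by blast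
    have "(transpose_mat P * P) $$ (i, j) = (\<Sum>l<m. P $$ (l, i) * P $$ (l, j))"
      using Pc i j by (simp add: scalar_prod_def atLeast0LessThan)
    also have "\<dots> = (\<Sum>l<m. if l = l0 then (if j = i then 1 else 0) else 0)"
    proof (rule sum.cong[OF refl])
      fix l assume "l \<in> {..<m}"
      then have l: "l < m" by simp
      have "(\<pi> l = i) = (l = l0)" using inj[OF l l0(1)] l0 by auto
      then show "P $$ (l, i) * P $$ (l, j) = (if l = l0 then (if j = i then 1 else 0) else 0)"
        using Pe[OF l i] Pe[OF l j] by auto
    qed
    also have "\<dots> = (if j = i then 1 else 0)" using l0 by simp
    also have "\<dots> = 1\<^sub>m m $$ (i, j)" using i j by auto
    finally show "(transpose_mat P * P) $$ (i, j) = 1\<^sub>m m $$ (i, j)" .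
  qed (insert Pc, auto)
  show "P * transpose_mat P = 1\<^sub>m m"
  proof (rule eq_matI)
    fix i j assume "i < dim_row (1\<^sub>m m :: 'a mat)" "j < dim_col (1\<^sub>m m :: 'a mat)"
    then have i: "i < m" and j: "j < m" by auto
    have "(P * transpose_mat P) $$ (i, j) = (\<Sum>l<m. P $$ (i, l) * P $$ (j, l))"
      using Pc i j by (simp add: scalar_prod_def atLeast0LessThan)
    also have "\<dots> = (\<Sum>l<m. if l = \<pi> i then (if \<pi> j = \<pi> i then 1 else 0) else 0)"
      by (rule sum.cong[OF refl], insert Pe i j, auto)
    also have "\<dots> = (if \<pi> j = \<pi> i then 1 else 0)" using rng[OF i] by simp
    also have "\<dots> = 1\<^sub>m m $$ (i, j)" using i j inj by auto
    finally show "(P * transpose_mat P) $$ (i, j) = 1\<^sub>m m $$ (i, j)" .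
  qed (insert Pc, auto)
qed

lemma det_inv:
  assumes "R \<in> carrier_mat m m" "det R \<noteq> (0 :: 'a :: field)"
  obtains B where "B \<in> carrier_mat m m" "B * R = 1\<^sub>m m" "R * B = 1\<^sub>m m"
proof -
  from det_non_zero_imp_unit[OF assms, of "()"]
  have "R \<in> Units (ring_mat TYPE('a) m ())" .
  from this[unfolded Units_def ring_mat_def] that show ?thesis by auto
qed

theorem lemma4p6:
  fixes M :: "('a::field, 'v::finite) aci"
    and m n p :: nat and F :: "nat set" and P :: "'a mat"
  assumes "is_aci M m n"
    and "permutation_mat m P"
    and "lower_left_zero (aci_rmult (aci_lmult P M) (Q_F n F)) p (card F)"
    and "rows_lin_indep (blockA (aci_rmult (aci_lmult P M) (Q_F n F)) p (card F))"
  shows "(factor_set M m n F \<longrightarrow>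
            decomp_form True (aci_rmult (aci_lmult P M) (Q_F n F)) m n (card F) p)
       \<and> (semifactor_set M m n F \<longrightarrow>
            decomp_form False (aci_rmult (aci_lmult P M) (Q_F n F)) m n (card F) p)"
proof -
  let ?Q = "Q_F n F :: 'a mat"
  have Q: "?Q \<in> carrier_mat n n" unfolding Q_F_def by auto
  have Mk: "M k \<in> carrier_mat m n" for k using assms(1) unfolding is_aci_def aci_dim_def by auto
  note Pf = perm_inv[OF assms(2)]
  have gen: "decomp_form b (aci_rmult (aci_lmult P M) ?Q) m n (card F) p"
    if ex: "\<exists>R p'. R \<in> carrier_mat m m \<and> det R \<noteq> 0 \<and>
        decomp_form b (aci_rmult (aci_lmult R M) ?Q) m n (card F) p'" for b
  proof -
    obtain R p' where R: "R \<in> carrier_mat m m" "det R \<noteq> 0"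
      and df: "decomp_form b (aci_rmult (aci_lmult R M) ?Q) m n (card F) p'" using ex by blast
    obtain B where B: "B \<in> carrier_mat m m" "B * R = 1\<^sub>m m" "R * B = 1\<^sub>m m" using det_inv[OF R] by blast
    define T where "T = R * transpose_mat P"
    define S where "S = P * B"
    have Pt: "transpose_mat P \<in> carrier_mat m m" using Pf(1) by auto
    have T: "T \<in> carrier_mat m m" unfolding T_def using R Pt by auto
    have S: "S \<in> carrier_mat m m" unfolding S_def using B Pf(1) by auto
    have ST: "S * T = 1\<^sub>m m"
    proof -
      have "S * T = P * (B * (R * transpose_mat P))"
        unfolding S_def T_def using Pf(1) B R Pt by (meson assoc_mult_mat mult_carrier_mat)
      also have "\<dots> = P * ((B * R) * transpose_mat P)"
        using B R Pt by (metis assoc_mult_mat)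
      also have "\<dots> = P * (B * R) * transpose_mat P"
        using B R Pt Pf(1) by (metis assoc_mult_mat mult_carrier_mat)
      also have "\<dots> = 1\<^sub>m m" using B(2) Pf(1,3) by simp
      finally show ?thesis .
    qed
    have NT: "\<forall>k. aci_rmult (aci_lmult R M) ?Q k = T * aci_rmult (aci_lmult P M) ?Q k"
    proof
      fix k
      have PM: "P * M k \<in> carrier_mat m n" using Pf(1) Mk[of k] by auto
      have "T * aci_rmult (aci_lmult P M) ?Q k = T * ((P * M k) * ?Q)"
        unfolding aci_rmult_def aci_lmult_def ..
      also have "\<dots> = (T * (P * M k)) * ?Q" using T PM Q by (metis assoc_mult_mat)
      also have "T * (P * M k) = R * (transpose_mat P * (P * M k))"
        unfolding T_def using R Pt PM by (metis assoc_mult_mat)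
      also have "transpose_mat P * (P * M k) = (transpose_mat P * P) * M k"
        using Pt Pf(1) Mk[of k] by (metis assoc_mult_mat)
      also have "\<dots> = M k" using Pf(2) Mk[of k] by simp
      also have "(R * M k) * ?Q = aci_rmult (aci_lmult R M) ?Q k"
        unfolding aci_rmult_def aci_lmult_def ..
      finally show "aci_rmult (aci_lmult R M) ?Q k = T * aci_rmult (aci_lmult P M) ?Q k" by simp
    qed
    show ?thesis
    proof (rule core[OF _ _ T S ST NT assms(3) assms(4) df])
      show "\<forall>k. aci_rmult (aci_lmult P M) ?Q k \<in> carrier_mat m n"
        unfolding aci_rmult_def aci_lmult_def using Pf(1) Mk Q by auto
      show "\<forall>k. aci_rmult (aci_lmult R M) ?Q k \<in> carrier_mat m n"
        unfolding aci_rmult_def aci_lmult_def using R Mk Q by auto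
    qed
  qed
  show ?thesis
    using gen[of True] gen[of False] unfolding factor_set_def semifactor_set_def by blast
qed

end
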